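(* Let $D\mapsto f_D$ be a functional summary with $f_D\in\mathcal{H}_{1,C}$ for all $D\in\mathcal{D}$, and suppose the global sensitivity $\Delta=\sup_{D\sim D'}\|f_D-f_{D'}\|_{1,C}$ (supremum over adjacent pairs) satisfies $0<\Delta<\infty$. Let $\epsilon>0$, $\sigma=\sqrt2\,\Delta/\epsilon$, and let $Z$ be an ICLP with mean $0$ and covariance operator $C$. Then the mechanism releasing $\tilde f_D=f_D+\sigma Z$ satisfies $\epsilon$-differential privacy.
   Context: $\mathbb{H}$ is a real separable infinite-dimensional Hilbert space. $C$ is a covariance operator on $\mathbb{H}$ with eigenvalues $\lambda_1\ge\lambda_2\ge\dots>0$ and eigenvectors $\{\phi_j\}_{j\ge1}$ forming an orthonormal basis of $\mathbb{H}$; $h_j=\langle h,\phi_j\rangle$. $\|h\|_{1,C}=\sum_j|h_j|/\sqrt{\lambda_j}$, $\mathcal{H}_{1,C}=\{h:\|h\|_{1,C}<\infty\}$. An ICLP with mean $\mu$ and covariance operator $C$ is the random element $\mu+\sum_{j\ge1}\sqrt{\lambda_j}Z_j\phi_j$ (series converging in $L^2(\Omega;\mathbb{H})$), where $Z_j$ are i.i.d. Laplace with mean $0$ and variance $1$, i.e. with density $\frac1{\sqrt2}e^{-\sqrt2|x|}$ (with this normalization the scale factor is $\sqrt2\Delta/\epsilon$; the paper writes $\Delta/\epsilon$ with Laplace-scale normalization). Datasets $D,D'$ are adjacent ($D\sim D'$) if they differ in exactly one record. The mechanism is $\epsilon$-differentially private if $P_D(A)\le e^{\epsilon}P_{D'}(A)$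 for all adjacent $D,D'$ and all Borel $A\subseteq\mathbb{H}$, where $P_D$ is the law of $\tilde f_D$. *)

theory Defs
  imports "HOL-Probability.Probability"
begin

definition orthonormal_basis :: "(nat \<Rightarrow> 'a::{real_inner,complete_space}) \<Rightarrow> bool" where
  "orthonormal_basis \<phi> \<longleftrightarrow>
     (\<forall>i j. \<phi> i \<bullet> \<phi> j = (if i = j then 1 else 0)) \<and> closure (span (range \<phi>)) = UNIV"

definition norm1C :: "(nat \<Rightarrow> real) \<Rightarrow> (nat \<Rightarrow> 'a::real_inner) \<Rightarrow> 'a \<Rightarrow> real" where
  "norm1C lam \<phi> h = (\<Sum>j. \<bar>h \<bullet> \<phi> j\<bar> / sqrt (lam j))"

definition in_H1C :: "(nat \<Rightarrow> real) \<Rightarrow> (nat \<Rightarrow> 'a::real_inner) \<Rightarrow> 'a \<Rightarrow> bool" where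
  "in_H1C lam \<phi> h \<longleftrightarrow> summable (\<lambda>j. \<bar>h \<bullet> \<phi> j\<bar> / sqrt (lam j))"

text \<open>Laplace density with mean 0 and variance 1.\<close>
definition laplace_density :: "real \<Rightarrow> real" where
  "laplace_density x = exp (- sqrt 2 * \<bar>x\<bar>) / sqrt 2"

text \<open>Z is an ICLP with mean mu and covariance operator with eigenpairs (lam j, phi j), on the
  probability space M: Z is the L^2(M;H)-limit of mu + sum_{j<n} sqrt(lam j) Z_j phi_j with
  Z_j i.i.d. standard (variance 1) Laplace.\<close>
definition is_ICLP :: "'w measure \<Rightarrow> (nat \<Rightarrow> real) \<Rightarrow> (nat \<Rightarrow> 'a::{real_inner,complete_space})
     \<Rightarrow> 'a \<Rightarrow> ('w \<Rightarrow> 'a) \<Rightarrow> bool" where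
  "is_ICLP M lam \<phi> \<mu> Z \<longleftrightarrow>
     Z \<in> borel_measurable M \<and>
     (\<exists>Zs :: nat \<Rightarrow> 'w \<Rightarrow> real.
        prob_space.indep_vars M (\<lambda>_. borel) Zs UNIV \<and>
        (\<forall>j. distributed M lborel (Zs j) (\<lambda>x. ennreal (laplace_density x))) \<and>
        (\<lambda>n. \<integral>\<^sup>+ \<omega>. ennreal ((norm (\<mu> + (\<Sum>j<n. (sqrt (lam j) * Zs j \<omega>) *\<^sub>R \<phi> j) - Z \<omega>))\<^sup>2) \<partial>M)
          \<longlonglongrightarrow> 0)"

definition adjacent :: "'r list \<Rightarrow> 'r list \<Rightarrow> bool" where
  "adjacent D D' \<longleftrightarrow> length D = length D' \<and> card {i. i < length D \<and> D ! i \<noteq> D' ! i} = 1"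

definition sensitivity :: "(nat \<Rightarrow> real) \<Rightarrow> (nat \<Rightarrow> 'a::real_inner) \<Rightarrow> 'r list set
     \<Rightarrow> ('r list \<Rightarrow> 'a) \<Rightarrow> ereal" where
  "sensitivity lam \<phi> Ds f =
     (SUP p \<in> {(D, D'). D \<in> Ds \<and> D' \<in> Ds \<and> adjacent D D'}.
        ereal (norm1C lam \<phi> (f (fst p) - f (snd p))))"

definition differentially_private :: "real \<Rightarrow> 'r list set \<Rightarrow> ('r list \<Rightarrow> 'a::topological_space measure) \<Rightarrow> bool" where
  "differentially_private \<epsilon> Ds P \<longleftrightarrow>
     (\<forall>D\<in>Ds. \<forall>D'\<in>Ds. adjacent D D' \<longrightarrow>
        (\<forall>A \<in> sets borel. measure (P D) A \<le> exp \<epsilon> * measure (P D') A))"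

end

theory Submission
  imports Defs
begin


lemma on_norm_sum:
  fixes \<phi> :: "nat \<Rightarrow> 'a::real_inner"
  assumes on: "\<And>i j. \<phi> i \<bullet> \<phi> j = (if i = j then 1 else 0)" and F: "finite F"
  shows "(norm (\<Sum>j\<in>F. a j *\<^sub>R \<phi> j))\<^sup>2 = (\<Sum>j\<in>F. (a j)\<^sup>2)"
proof -
  have "(norm (\<Sum>j\<in>F. a j *\<^sub>R \<phi> j))\<^sup>2 = (\<Sum>j\<in>F. \<Sum>n\<in>F. a j * (a n * (\<phi> n \<bullet> \<phi> j)))"
    by (simp add: power2_norm_eq_inner inner_sum_left inner_sum_right algebra_simps sum_distrib_left)
  also have "\<dots> = (\<Sum>i\<in>F. (a i)\<^sup>2)"
    using F by (simp add: on power2_eq_square if_distrib cong: if_cong)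
  finally show ?thesis .
qed

lemma on_convergent:
  fixes \<phi> :: "nat \<Rightarrow> 'a::{real_inner,complete_space}"
  assumes on: "\<And>i j. \<phi> i \<bullet> \<phi> j = (if i = j then 1 else 0)" and s: "summable (\<lambda>j. (a j)\<^sup>2)"
  shows "convergent (\<lambda>n. \<Sum>j<n. a j *\<^sub>R \<phi> j)"
proof (rule Cauchy_convergent, rule metric_CauchyI)
  fix e :: real assume e: "e > 0"
  then have "e\<^sup>2 > 0" by simp
  from s[unfolded summable_Cauchy] this obtain N where N: "\<And>m n. m \<ge> N \<Longrightarrow> norm (\<Sum>j=m..<n. (a j)\<^sup>2) < e\<^sup>2"
    by blast
  have key: "dist (\<Sum>j<m. a j *\<^sub>R \<phi> j) (\<Sum>j<n. a j *\<^sub>R \<phi> j) < e" if "N \<le> m" "m \<le> n" for m n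
  proof -
    have "(\<Sum>j<n. a j *\<^sub>R \<phi> j) = (\<Sum>j<m. a j *\<^sub>R \<phi> j) + (\<Sum>j=m..<n. a j *\<^sub>R \<phi> j)"
      using that by (metis sum.atLeastLessThan_concat lessThan_atLeast0 le0)
    then have "dist (\<Sum>j<m. a j *\<^sub>R \<phi> j) (\<Sum>j<n. a j *\<^sub>R \<phi> j) = norm (\<Sum>j=m..<n. a j *\<^sub>R \<phi> j)"
      by (simp add: dist_norm norm_minus_commute)
    moreover have "(norm (\<Sum>j=m..<n. a j *\<^sub>R \<phi> j))\<^sup>2 < e\<^sup>2"
      using N[of m n] that by (simp add: on_norm_sum[OF on])
    ultimately show ?thesis using e by (simp add: power_less_imp_less_base)
  qed
  show "\<exists>M. \<forall>m\<ge>M. \<forall>n\<ge>M. dist (\<Sum>j<m. a j *\<^sub>R \<phi> j) (\<Sum>j<n. a j *\<^sub>R \<phi> j) < e"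
    by (metis key dist_commute nle_le)
qed

lemma onb_expansion:
  fixes \<phi> :: "nat \<Rightarrow> 'a::{real_inner,complete_space}"
  assumes onb: "orthonormal_basis \<phi>" and s: "summable (\<lambda>j. (h \<bullet> \<phi> j)\<^sup>2)"
  shows "(\<lambda>n. \<Sum>j<n. (h \<bullet> \<phi> j) *\<^sub>R \<phi> j) \<longlonglongrightarrow> h"
proof -
  have on: "\<And>i j. \<phi> i \<bullet> \<phi> j = (if i = j then 1 else 0)" and cl: "closure (span (range \<phi>)) = UNIV"
    using onb by (auto simp: orthonormal_basis_def)
  obtain g where g: "(\<lambda>n. \<Sum>j<n. (h \<bullet> \<phi> j) *\<^sub>R \<phi> j) \<longlonglongrightarrow> g"
    using on_convergent[OF on s] by (auto simp: convergent_def)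
  have gk: "g \<bullet> \<phi> k = h \<bullet> \<phi> k" for k
  proof -
    have t: "(\<lambda>n. (\<Sum>j<n. (h \<bullet> \<phi> j) *\<^sub>R \<phi> j) \<bullet> \<phi> k) \<longlonglongrightarrow> g \<bullet> \<phi> k"
      by (intro tendsto_inner g tendsto_const)
    have ev: "\<forall>n\<ge>Suc k. (\<Sum>j<n. (h \<bullet> \<phi> j) *\<^sub>R \<phi> j) \<bullet> \<phi> k = h \<bullet> \<phi> k"
      by (auto simp: inner_sum_left on if_distrib cong: if_cong)
    have "(\<lambda>n. (\<Sum>j<n. (h \<bullet> \<phi> j) *\<^sub>R \<phi> j) \<bullet> \<phi> k) \<longlonglongrightarrow> h \<bullet> \<phi> k"
    proof (rule LIMSEQ_offset[where k="Suc k"])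
      have "(\<lambda>n. (\<Sum>j<n + Suc k. (h \<bullet> \<phi> j) *\<^sub>R \<phi> j) \<bullet> \<phi> k) = (\<lambda>_. h \<bullet> \<phi> k)"
        using ev by (intro ext) (metis le_add2)
      then show "(\<lambda>n. (\<Sum>j<n + Suc k. (h \<bullet> \<phi> j) *\<^sub>R \<phi> j) \<bullet> \<phi> k) \<longlonglongrightarrow> h \<bullet> \<phi> k" by simp
    qed
    with t show ?thesis by (rule LIMSEQ_unique)
  qed
  let ?T = "{x. (h - g) \<bullet> x = 0}"
  have "span (range \<phi>) \<subseteq> ?T"
    by (rule span_minimal) (auto simp: gk inner_diff_left subspace_def inner_add_right)
  moreover have "closed ?T" by (rule closed_hyperplane)
  ultimately have "closure (span (range \<phi>)) \<subseteq> ?T" by (rule closure_minimal)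
  then have "(h - g) \<bullet> (h - g) = 0" using cl by blast
  then have "h = g" by simp
  then show ?thesis using g by simp
qed



lemma laplace_density_nonneg: "0 \<le> laplace_density x"
  by (simp add: laplace_density_def)

lemma laplace_shift_le: "laplace_density (x - c) \<le> exp (sqrt 2 * \<bar>c\<bar>) * laplace_density x"
proof -
  have "\<bar>x\<bar> \<le> \<bar>x - c\<bar> + \<bar>c\<bar>" by linarith
  then have "sqrt 2 * \<bar>x\<bar> \<le> sqrt 2 * (\<bar>x - c\<bar> + \<bar>c\<bar>)"
    by (intro mult_left_mono) auto
  then have "- sqrt 2 * \<bar>x - c\<bar> \<le> sqrt 2 * \<bar>c\<bar> + - sqrt 2 * \<bar>x\<bar>"
    by (simp add: distrib_left)
  then have "exp (- sqrt 2 * \<bar>x - c\<bar>) \<le> exp (sqrt 2 * \<bar>c\<bar>) * exp (- sqrt 2 * \<bar>x\<bar>)"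
    by (simp add: exp_add[symmetric])
  then show ?thesis unfolding laplace_density_def by (simp add: divide_right_mono)
qed

lemma laplace_density_borel[measurable]: "laplace_density \<in> borel_measurable borel"
  unfolding laplace_density_def by measurable

lemma laplace_set_shift:
  assumes S[measurable]: "S \<in> sets borel"
  shows "emeasure (density lborel (\<lambda>x. ennreal (laplace_density x))) ((\<lambda>x. x + c) -` S)
     \<le> ennreal (exp (sqrt 2 * \<bar>c\<bar>)) * emeasure (density lborel (\<lambda>x. ennreal (laplace_density x))) S"
proof -
  have m: "(\<lambda>x. x + c) -` S \<in> sets borel" by (rule measurable_sets_borel[OF _ S]) simp
  have "emeasure (density lborel (\<lambda>x. ennreal (laplace_density x))) ((\<lambda>x. x + c) -` S)
      = (\<integral>\<^sup>+x. ennreal (laplace_density x) * indicator S (x + c) \<partial>lborel)"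
    using m by (subst emeasure_density) (auto intro!: nn_integral_cong split: split_indicator)
  also have "\<dots> = (\<integral>\<^sup>+x. ennreal (laplace_density (- c + 1 * x)) * indicator S (- c + 1 * x + c) \<partial>lborel)"
    by (subst nn_integral_real_affine[where c=1 and t="-c"]) auto
  also have "\<dots> = (\<integral>\<^sup>+x. ennreal (laplace_density (x - c)) * indicator S x \<partial>lborel)"
    by simp
  also have "\<dots> \<le> (\<integral>\<^sup>+x. ennreal (exp (sqrt 2 * \<bar>c\<bar>)) * (ennreal (laplace_density x) * indicator S x) \<partial>lborel)"
  proof (intro nn_integral_mono)
    fix x
    have "ennreal (laplace_density (x - c)) \<le> ennreal (exp (sqrt 2 * \<bar>c\<bar>)) * ennreal (laplace_density x)"
      using laplace_shift_le[of x c] by (simp add: ennreal_mult'[symmetric] ennreal_leI)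
    then show "ennreal (laplace_density (x - c)) * indicator S x \<le> ennreal (exp (sqrt 2 * \<bar>c\<bar>)) * (ennreal (laplace_density x) * indicator S x)"
      by (cases "x \<in> S") auto
  qed
  also have "\<dots> = ennreal (exp (sqrt 2 * \<bar>c\<bar>)) * emeasure (density lborel (\<lambda>x. ennreal (laplace_density x))) S"
    by (subst nn_integral_cmult) (auto simp: emeasure_density)
  finally show ?thesis .
qed



abbreviation SP :: "(nat \<Rightarrow> real) measure" where
  "SP \<equiv> PiM (UNIV::nat set) (\<lambda>_. borel::real measure)"

lemma space_SP[simp]: "space SP = UNIV"
  by (simp add: space_PiM)

definition Lap :: "real measure" where
  "Lap = density lborel (\<lambda>x. ennreal (laplace_density x))"

definition LP :: "(nat \<Rightarrow> real) measure" where
  "LP = PiM UNIV (\<lambda>_. Lap)"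

lemma sets_Lap[simp, measurable_cong]: "sets Lap = sets borel"
  by (simp add: Lap_def)

lemma space_Lap[simp]: "space Lap = UNIV"
  by (simp add: Lap_def)

lemma sets_LP[simp, measurable_cong]: "sets LP = sets SP"
  unfolding LP_def by (rule sets_PiM_cong) auto

lemma space_LP[simp]: "space LP = UNIV"
  by (simp add: LP_def space_PiM)

locale lapprob =
  assumes Lap_prob: "prob_space Lap"
begin

lemma LP_prob: "prob_space LP"
  unfolding LP_def by (rule prob_space_PiM) (rule Lap_prob)

lemma one_shift:
  assumes B[measurable]: "B \<in> sets SP"
  shows "emeasure LP ((\<lambda>z j. z j + (if j = k then c else 0)) -` B)
     \<le> ennreal (exp (sqrt 2 * \<bar>c\<bar>)) * emeasure LP B"
proof -
  let ?K = "UNIV - {k}"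
  define R where "R = PiM ?K (\<lambda>_. Lap)"
  define h where "h = (\<lambda>(x::real, X::nat\<Rightarrow>real). X(k := x))"
  interpret Lp: prob_space Lap by (rule Lap_prob)
  interpret Rp: prob_space R unfolding R_def by (rule prob_space_PiM) (rule Lap_prob)
  interpret LR: pair_sigma_finite Lap R
    by (intro pair_sigma_finite.intro Lp.sigma_finite_measure_axioms Rp.sigma_finite_measure_axioms)
  have ins: "insert k ?K = UNIV" by auto
  have LPd: "distr (Lap \<Otimes>\<^sub>M R) LP h = LP"
    using distr_pair_PiM_eq_PiM[of ?K "\<lambda>_. Lap" k] Lap_prob unfolding R_def LP_def h_def ins
    by simp
  have hm[measurable]: "h \<in> measurable (Lap \<Otimes>\<^sub>M R) SP"
  proof (rule measurable_PiM_single')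
    fix i :: nat
    show "(\<lambda>\<omega>. h \<omega> i) \<in> borel_measurable (Lap \<Otimes>\<^sub>M R)"
    proof (cases "i = k")
      case True
      then have "(\<lambda>\<omega>. h \<omega> i) = fst" by (auto simp: h_def)
      then show ?thesis by simp
    next
      case False
      then have "(\<lambda>\<omega>. h \<omega> i) = (\<lambda>y. y i) \<circ> snd" by (auto simp: h_def)
      have "(\<lambda>y. y i) \<in> measurable R Lap"
        unfolding R_def using False by (intro measurable_component_singleton) auto
      moreover have "measurable R Lap = measurable R borel"
        by (rule measurable_cong_sets) simp_all
      ultimately have "(\<lambda>y. y i) \<in> borel_measurable R" by simp
      with \<open>(\<lambda>\<omega>. h \<omega> i) = (\<lambda>y. y i) \<circ> snd\<close> show ?thesis by simp
    qed
  qed auto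
  define \<Phi> where "\<Phi> = (\<lambda>a. {xX \<in> space (Lap \<Otimes>\<^sub>M R). h (fst xX + a, snd xX) \<in> B})"
  have \<Phi>m: "\<Phi> a \<in> sets (Lap \<Otimes>\<^sub>M R)" for a
    unfolding \<Phi>_def by measurable
  have hs: "h (x + a, X) = (\<lambda>j. h (x, X) j + (if j = k then a else 0))" for x X a
    by (auto simp: h_def)
  have ev: "emeasure LP ((\<lambda>z j. z j + (if j = k then a else 0)) -` B)
      = (\<integral>\<^sup>+X. emeasure Lap ((\<lambda>x. (x, X)) -` \<Phi> a) \<partial>R)" for a
  proof -
    have sm: "(\<lambda>z j. z j + (if j = k then a else 0)) -` B \<in> sets SP"
    proof -
      have "(\<lambda>z j. z j + (if j = k then a else 0)) \<in> measurable SP SP"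
        by (rule measurable_PiM_single') auto
      from measurable_sets[OF this B] show ?thesis by simp
    qed
    have "emeasure LP ((\<lambda>z j. z j + (if j = k then a else 0)) -` B)
        = emeasure (distr (Lap \<Otimes>\<^sub>M R) LP h) ((\<lambda>z j. z j + (if j = k then a else 0)) -` B)"
      by (simp add: LPd)
    also have "\<dots> = emeasure (Lap \<Otimes>\<^sub>M R) (h -` ((\<lambda>z j. z j + (if j = k then a else 0)) -` B) \<inter> space (Lap \<Otimes>\<^sub>M R))"
      using sm by (subst emeasure_distr) (auto simp: measurable_cong_sets[OF refl sets_LP])
    also have "h -` ((\<lambda>z j. z j + (if j = k then a else 0)) -` B) \<inter> space (Lap \<Otimes>\<^sub>M R) = \<Phi> a"
      unfolding \<Phi>_def by (auto simp: hs)
    also have "emeasure (Lap \<Otimes>\<^sub>M R) (\<Phi> a) = (\<integral>\<^sup>+X. emeasure Lap ((\<lambda>x. (x, X)) -` \<Phi> a) \<partial>R)"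
      by (rule LR.emeasure_pair_measure_alt2[OF \<Phi>m])
    finally show ?thesis .
  qed
  have sec: "(\<lambda>x. (x, X)) -` \<Phi> a = (\<lambda>x. x + a) -` ((\<lambda>x. (x, X)) -` \<Phi> 0)" if "X \<in> space R" for X a
    using that unfolding \<Phi>_def by (auto simp: space_pair_measure)
  have secm: "(\<lambda>x. (x, X)) -` \<Phi> 0 \<in> sets borel" for X
    using sets_Pair2[OF \<Phi>m[of 0]] by simp
  have "emeasure LP ((\<lambda>z j. z j + (if j = k then c else 0)) -` B)
      = (\<integral>\<^sup>+X. emeasure Lap ((\<lambda>x. (x, X)) -` \<Phi> c) \<partial>R)"
    by (rule ev)
  also have "\<dots> \<le> (\<integral>\<^sup>+X. ennreal (exp (sqrt 2 * \<bar>c\<bar>)) * emeasure Lap ((\<lambda>x. (x, X)) -` \<Phi> 0) \<partial>R)"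
  proof (rule nn_integral_mono)
    fix X assume X: "X \<in> space R"
    show "emeasure Lap ((\<lambda>x. (x, X)) -` \<Phi> c) \<le> ennreal (exp (sqrt 2 * \<bar>c\<bar>)) * emeasure Lap ((\<lambda>x. (x, X)) -` \<Phi> 0)"
      unfolding sec[OF X, of c] Lap_def by (rule laplace_set_shift[OF secm])
  qed
  also have "\<dots> = ennreal (exp (sqrt 2 * \<bar>c\<bar>)) * (\<integral>\<^sup>+X. emeasure Lap ((\<lambda>x. (x, X)) -` \<Phi> 0) \<partial>R)"
    by (rule nn_integral_cmult) (rule LR.measurable_emeasure_Pair2[OF \<Phi>m])
  also have "(\<integral>\<^sup>+X. emeasure Lap ((\<lambda>x. (x, X)) -` \<Phi> 0) \<partial>R) = emeasure LP B"
    using ev[of 0] by simp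
  finally show ?thesis .
qed

end


lemma approx_generator:
  fixes \<mu> \<nu> :: "'a measure"
  assumes fm: "finite_measure \<mu>" "finite_measure \<nu>"
    and sp: "space \<mu> = UNIV" "sets \<nu> = sets \<mu>"
    and gen: "sets \<mu> = sigma_sets UNIV G"
    and Gint: "Int_stable G" and Gempty: "{} \<in> G"
    and Gcompl: "\<And>B. B \<in> G \<Longrightarrow> - B \<in> G"
    and Gun: "\<And>B C. B \<in> G \<Longrightarrow> C \<in> G \<Longrightarrow> B \<union> C \<in> G"
    and A: "A \<in> sets \<mu>"
  shows "\<forall>e>0. \<exists>B\<in>G. measure \<mu> ((A - B) \<union> (B - A)) + measure \<nu> ((A - B) \<union> (B - A)) < e"
proof -
  interpret m: finite_measure \<mu> by (rule fm)
  interpret n: finite_measure \<nu> by (rule fm)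
  define \<rho> where "\<rho> X = measure \<mu> X + measure \<nu> X" for X
  have Gs: "G \<subseteq> sets \<mu>" using gen sigma_sets_superset_generator by blast
  have \<rho>mono: "\<rho> X \<le> \<rho> Y" if "X \<subseteq> Y" "Y \<in> sets \<mu>" for X Y
    using that sp unfolding \<rho>_def
    by (intro add_mono m.finite_measure_mono n.finite_measure_mono) auto
  have \<rho>sub: "\<rho> (X \<union> Y) \<le> \<rho> X + \<rho> Y" if "X \<in> sets \<mu>" "Y \<in> sets \<mu>" for X Y
    using that sp measure_Un_le[of X \<mu> Y] measure_Un_le[of X \<nu> Y]
    unfolding \<rho>_def by auto
  have \<rho>subf: "\<rho> (\<Union>i\<in>I. X i) \<le> (\<Sum>i\<in>I. \<rho> (X i))" if "finite I" "\<And>i. i \<in> I \<Longrightarrow> X i \<in> sets \<mu>" for I X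
  proof -
    have s: "X ` I \<subseteq> sets \<mu>" "X ` I \<subseteq> sets \<nu>" using that sp by auto
    show ?thesis unfolding \<rho>_def sum.distrib
      using m.finite_measure_subadditive_finite[OF that(1) s(1)] n.finite_measure_subadditive_finite[OF that(1) s(2)]
      by linarith
  qed
  have \<rho>nn: "\<rho> X \<ge> 0" for X unfolding \<rho>_def by simp
  have Gunf: "\<And>B. (\<And>i. i < N \<Longrightarrow> B i \<in> G) \<Longrightarrow> (\<Union>i<N. B i) \<in> G" for N :: nat
    by (induction N) (auto simp: lessThan_Suc Gempty Un_commute intro!: Gun)
  let ?Q = "\<lambda>A. \<forall>e>0. \<exists>B\<in>G. \<rho> ((A - B) \<union> (B - A)) < e"
  have Gp: "G \<subseteq> Pow UNIV" by simp
  have A': "A \<in> sigma_sets UNIV G" using A gen by simp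
  have "?Q A"
    using Gint Gp A'
  proof (induction rule: sigma_sets_induct_disjoint)
    case (basic A)
    then show ?case by (intro allI impI bexI[of _ A]) (auto simp: \<rho>_def)
  next
    case empty
    then show ?case using Gempty by (auto simp: \<rho>_def intro!: bexI[of _ "{}"])
  next
    case (compl A)
    show ?case
    proof (intro allI impI)
      fix e :: real assume "e > 0"
      with compl obtain B where "B \<in> G" "\<rho> ((A - B) \<union> (B - A)) < e" by blast
      moreover have "((UNIV - A) - (- B)) \<union> ((- B) - (UNIV - A)) = (A - B) \<union> (B - A)" by auto
      ultimately show "\<exists>B\<in>G. \<rho> (((UNIV - A) - B) \<union> (B - (UNIV - A))) < e"
        using Gcompl by metis
    qed
  next
    case (union A)
    have As: "A i \<in> sets \<mu>" for i using union(2) gen by auto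
    define U where "U = (\<Union>i. A i)"
    have Us: "U \<in> sets \<mu>" unfolding U_def using As by auto
    define Uf where "Uf N = (\<Union>i<N. A i)" for N
    have Ufs: "Uf N \<in> sets \<mu>" for N unfolding Uf_def using As by auto
    have inc: "incseq Uf" unfolding Uf_def incseq_def by (auto intro: less_le_trans)
    have UfU: "(\<Union>N. Uf N) = U" unfolding Uf_def U_def by auto
    have "(\<lambda>N. measure \<mu> (Uf N)) \<longlonglongrightarrow> measure \<mu> U"
      using m.finite_Lim_measure_incseq[of Uf] inc Ufs UfU by auto
    moreover have "(\<lambda>N. measure \<nu> (Uf N)) \<longlonglongrightarrow> measure \<nu> U"
      using n.finite_Lim_measure_incseq[of Uf] inc Ufs UfU sp by auto
    ultimately have lim: "(\<lambda>N. \<rho> (Uf N)) \<longlonglongrightarrow> \<rho> U"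
      unfolding \<rho>_def by (intro tendsto_add)
    show ?case
    proof (intro allI impI)
      fix e :: real assume e: "e > 0"
      from lim e obtain N where N: "\<bar>\<rho> (Uf N) - \<rho> U\<bar> < e / 2"
        by (metis LIMSEQ_iff half_gt_zero le_refl real_norm_def)
      have diff: "\<rho> (U - Uf N) = \<rho> U - \<rho> (Uf N)"
      proof -
        have ss: "Uf N \<subseteq> U" unfolding Uf_def U_def by auto
        have "measure \<mu> (U - Uf N) = measure \<mu> U - measure \<mu> (Uf N)"
          using Us Ufs[of N] ss by (rule m.finite_measure_Diff)
        moreover have "measure \<nu> (U - Uf N) = measure \<nu> U - measure \<nu> (Uf N)"
          using Us Ufs[of N] ss sp by (intro n.finite_measure_Diff) auto
        ultimately show ?thesis unfolding \<rho>_def by simp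
      qed
      have "\<forall>i. \<exists>B\<in>G. \<rho> ((A i - B) \<union> (B - A i)) < e / (2 * (Suc N))"
        using union(3) e by auto
      then obtain B where B: "\<And>i. B i \<in> G" "\<And>i. \<rho> ((A i - B i) \<union> (B i - A i)) < e / (2 * (Suc N))"
        by metis
      define BB where "BB = (\<Union>i<N. B i)"
      have BBG: "BB \<in> G" unfolding BB_def using B by (intro Gunf) auto
      have sub: "(U - BB) \<union> (BB - U) \<subseteq> (U - Uf N) \<union> (\<Union>i<N. (A i - B i) \<union> (B i - A i))"
        unfolding U_def BB_def Uf_def by auto
      have Bs: "B i \<in> sets \<mu>" for i using B Gs by auto
      have "\<rho> ((U - BB) \<union> (BB - U)) \<le> \<rho> ((U - Uf N) \<union> (\<Union>i<N. (A i - B i) \<union> (B i - A i)))"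
        using sub Us Ufs Bs As by (intro \<rho>mono) auto
      also have "\<dots> \<le> \<rho> (U - Uf N) + \<rho> (\<Union>i<N. (A i - B i) \<union> (B i - A i))"
        using Us Ufs Bs As by (intro \<rho>sub) auto
      also have "\<rho> (\<Union>i<N. (A i - B i) \<union> (B i - A i)) \<le> (\<Sum>i<N. \<rho> ((A i - B i) \<union> (B i - A i)))"
        using Bs As by (intro \<rho>subf) auto
      also have "\<dots> \<le> (\<Sum>i<N. e / (2 * (Suc N)))"
        using B(2) by (intro sum_mono) (simp add: less_imp_le)
      also have "\<dots> = N * (e / (2 * Suc N))" by simp
      also have "\<dots> < e / 2"
        using e by (simp add: field_simps)
      finally have "\<rho> ((U - BB) \<union> (BB - U)) < \<rho> (U - Uf N) + e / 2" by simp
      also have "\<rho> (U - Uf N) < e / 2" using diff N by linarith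
      finally show "\<exists>B\<in>G. \<rho> (((\<Union>i. A i) - B) \<union> (B - (\<Union>i. A i))) < e"
        using BBG unfolding U_def by auto
    qed
  qed
  then show ?thesis unfolding \<rho>_def .
qed

lemma le_from_generator:
  fixes \<mu> \<nu> :: "'a measure"
  assumes fm: "finite_measure \<mu>" "finite_measure \<nu>"
    and sp: "space \<mu> = UNIV" "sets \<nu> = sets \<mu>"
    and gen: "sets \<mu> = sigma_sets UNIV G"
    and Gint: "Int_stable G" and Gempty: "{} \<in> G"
    and Gcompl: "\<And>B. B \<in> G \<Longrightarrow> - B \<in> G"
    and Gun: "\<And>B C. B \<in> G \<Longrightarrow> C \<in> G \<Longrightarrow> B \<union> C \<in> G"
    and K: "K \<ge> 0"
    and leG: "\<And>B. B \<in> G \<Longrightarrow> measure \<nu> B \<le> K * measure \<mu> B"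
    and A: "A \<in> sets \<mu>"
  shows "measure \<nu> A \<le> K * measure \<mu> A"
proof (rule field_le_epsilon)
  interpret m: finite_measure \<mu> by (rule fm)
  interpret n: finite_measure \<nu> by (rule fm)
  have Gs: "G \<subseteq> sets \<mu>" using gen sigma_sets_superset_generator by blast
  fix e :: real assume e: "e > 0"
  then have "e / (K + 1) > 0" using K by simp
  with approx_generator[OF fm sp gen Gint Gempty Gcompl Gun A]
  obtain B where B: "B \<in> G" and Bl: "measure \<mu> ((A - B) \<union> (B - A)) + measure \<nu> ((A - B) \<union> (B - A)) < e / (K + 1)"
    by blast
  have Bs: "B \<in> sets \<mu>" using B Gs by auto
  let ?D = "(A - B) \<union> (B - A)"
  have Ds: "?D \<in> sets \<mu>" using A Bs by auto
  have 1: "measure \<nu> A \<le> measure \<nu> B + measure \<nu> ?D"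
  proof -
    have "measure \<nu> A \<le> measure \<nu> (B \<union> ?D)"
      using A Bs sp by (intro n.finite_measure_mono) auto
    also have "\<dots> \<le> measure \<nu> B + measure \<nu> ?D"
      using Bs Ds sp by (intro measure_Un_le) auto
    finally show ?thesis .
  qed
  have 2: "measure \<mu> B \<le> measure \<mu> A + measure \<mu> ?D"
  proof -
    have "measure \<mu> B \<le> measure \<mu> (A \<union> ?D)"
      using A Bs by (intro m.finite_measure_mono) auto
    also have "\<dots> \<le> measure \<mu> A + measure \<mu> ?D"
      using A Ds by (intro measure_Un_le) auto
    finally show ?thesis .
  qed
  have 3: "measure \<nu> B \<le> K * measure \<mu> B" by (rule leG[OF B])
  have "K * measure \<mu> B \<le> K * (measure \<mu> A + measure \<mu> ?D)"
    using 2 K by (rule mult_left_mono)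
  with 1 3 have "measure \<nu> A \<le> K * measure \<mu> A + (K * measure \<mu> ?D + measure \<nu> ?D)"
    by (simp add: algebra_simps)
  also have "K * measure \<mu> ?D + measure \<nu> ?D \<le> (K + 1) * (measure \<mu> ?D + measure \<nu> ?D)"
    using K by (simp add: algebra_simps)
  also have "\<dots> \<le> (K + 1) * (e / (K + 1))"
    using Bl K by (intro mult_left_mono) auto
  also have "\<dots> = e" using K by simp
  finally show "measure \<nu> A \<le> K * measure \<mu> A + e" by simp
qed



lemma shift_meas[measurable]: "(\<lambda>z j. z j + d j) \<in> measurable SP SP"
  by (rule measurable_PiM_single') auto

lemma shift_sets: "B \<in> sets SP \<Longrightarrow> (\<lambda>z j. z j + d j) -` B \<in> sets SP"
  using measurable_sets[OF shift_meas[of d], of B] by simp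

definition Gcyl :: "(nat \<Rightarrow> real) set set" where
  "Gcyl = {B \<in> sets SP. \<exists>n. \<forall>z z'. (\<forall>j<n. z j = z' j) \<longrightarrow> (z \<in> B \<longleftrightarrow> z' \<in> B)}"

lemma sets_SP_Gcyl: "sets SP = sigma_sets UNIV Gcyl"
proof -
  have "sets SP = sigma_sets UNIV {{f\<in>UNIV. f i \<in> A} | i A. i \<in> (UNIV::nat set) \<and> A \<in> sets (borel::real measure)}"
    using sets_PiM_single[of "UNIV::nat set" "\<lambda>_. borel::real measure"] by simp
  also have "\<dots> = sigma_sets UNIV Gcyl"
  proof (rule sigma_sets_eqI)
    fix a assume "a \<in> {{f\<in>UNIV. f i \<in> A} | i A. i \<in> (UNIV::nat set) \<and> A \<in> sets (borel::real measure)}"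
    then obtain i A where a: "a = {f. f i \<in> A}" and A: "A \<in> sets borel" by auto
    have "a \<in> sets SP"
      using measurable_sets[OF measurable_component_singleton[of i UNIV "\<lambda>_. borel::real measure"] A]
      unfolding a by (simp add: vimage_def)
    moreover have "\<forall>z z'. (\<forall>j<Suc i. z j = z' j) \<longrightarrow> (z \<in> a \<longleftrightarrow> z' \<in> a)"
      unfolding a by auto
    ultimately have "a \<in> Gcyl" unfolding Gcyl_def by blast
    then show "a \<in> sigma_sets UNIV Gcyl" by (rule sigma_sets.Basic)
  next
    fix b assume "b \<in> Gcyl"
    then have "b \<in> sets SP" by (simp add: Gcyl_def)
    with calculation show "b \<in> sigma_sets UNIV {{f\<in>UNIV. f i \<in> A} | i A. i \<in> (UNIV::nat set) \<and> A \<in> sets (borel::real measure)}"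
      by simp
  qed
  finally show ?thesis .
qed

lemma Gcyl_props:
  shows "Int_stable Gcyl" "{} \<in> Gcyl" "\<And>B. B \<in> Gcyl \<Longrightarrow> - B \<in> Gcyl"
    "\<And>B C. B \<in> Gcyl \<Longrightarrow> C \<in> Gcyl \<Longrightarrow> B \<union> C \<in> Gcyl"
proof -
  show "Int_stable Gcyl"
  proof (rule Int_stableI)
    fix a b assume "a \<in> Gcyl" "b \<in> Gcyl"
    then obtain n m where a: "a \<in> sets SP" "\<forall>z z'. (\<forall>j<n. z j = z' j) \<longrightarrow> (z \<in> a \<longleftrightarrow> z' \<in> a)"
      and b: "b \<in> sets SP" "\<forall>z z'. (\<forall>j<m. z j = z' j) \<longrightarrow> (z \<in> b \<longleftrightarrow> z' \<in> b)"
      unfolding Gcyl_def by blast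
    have "\<forall>z z'. (\<forall>j<max n m. z j = z' j) \<longrightarrow> (z \<in> a \<inter> b \<longleftrightarrow> z' \<in> a \<inter> b)"
      proof (intro allI impI)
      fix z z' :: "nat \<Rightarrow> real" assume h: "\<forall>j<max n m. z j = z' j"
      then have "\<forall>j<n. z j = z' j" "\<forall>j<m. z j = z' j" by auto
      then show "z \<in> a \<inter> b \<longleftrightarrow> z' \<in> a \<inter> b" using a(2) b(2) by blast
    qed
    then show "a \<inter> b \<in> Gcyl" using a b unfolding Gcyl_def by blast
  qed
  show "{} \<in> Gcyl" unfolding Gcyl_def by auto
  show "- B \<in> Gcyl" if "B \<in> Gcyl" for B
  proof -
    from that obtain n where a: "B \<in> sets SP" "\<forall>z z'. (\<forall>j<n. z j = z' j) \<longrightarrow> (z \<in> B \<longleftrightarrow> z' \<in> B)"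
      unfolding Gcyl_def by blast
    have "- B \<in> sets SP" using sets.compl_sets[OF a(1)] by (simp add: Compl_eq_Diff_UNIV)
    with a show ?thesis unfolding Gcyl_def by blast
  qed
  show "B \<union> C \<in> Gcyl" if "B \<in> Gcyl" "C \<in> Gcyl" for B C
  proof -
    from that obtain n m where a: "B \<in> sets SP" "\<forall>z z'. (\<forall>j<n. z j = z' j) \<longrightarrow> (z \<in> B \<longleftrightarrow> z' \<in> B)"
      and b: "C \<in> sets SP" "\<forall>z z'. (\<forall>j<m. z j = z' j) \<longrightarrow> (z \<in> C \<longleftrightarrow> z' \<in> C)"
      unfolding Gcyl_def by blast
    have "\<forall>z z'. (\<forall>j<max n m. z j = z' j) \<longrightarrow> (z \<in> B \<union> C \<longleftrightarrow> z' \<in> B \<union> C)"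
      proof (intro allI impI)
      fix z z' :: "nat \<Rightarrow> real" assume h: "\<forall>j<max n m. z j = z' j"
      then have "\<forall>j<n. z j = z' j" "\<forall>j<m. z j = z' j" by auto
      then show "z \<in> B \<union> C \<longleftrightarrow> z' \<in> B \<union> C" using a(2) b(2) by blast
    qed
    then show ?thesis using a b unfolding Gcyl_def by blast
  qed
qed

context lapprob
begin

lemma fin_shift:
  "(\<And>j. j \<ge> n \<Longrightarrow> d j = 0) \<Longrightarrow> B \<in> sets SP \<Longrightarrow>
   emeasure LP ((\<lambda>z j. z j + d j) -` B) \<le> ennreal (exp (sqrt 2 * (\<Sum>j<n. \<bar>d j\<bar>))) * emeasure LP B"
proof (induction n arbitrary: d B)
  case 0
  then have "(\<lambda>z j. z j + d j) = (\<lambda>z. z)" by (auto simp: fun_eq_iff)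
  then show ?case by simp
next
  case (Suc n)
  define d' where "d' = d(n := 0)"
  have d': "\<And>j. j \<ge> n \<Longrightarrow> d' j = 0" using Suc.prems(1) unfolding d'_def
    by (metis fun_upd_other fun_upd_same le_eq_less_or_eq Suc_le_eq)
  define B' where "B' = (\<lambda>z j. z j + d' j) -` B"
  have B'm: "B' \<in> sets SP" unfolding B'_def by (rule shift_sets[OF Suc.prems(2)])
  have fe: "\<And>z. (\<lambda>j. z j + (if j = n then d n else 0) + d' j) = (\<lambda>j. z j + d j)"
    unfolding d'_def by (auto simp: fun_eq_iff)
  have eq: "(\<lambda>z j. z j + d j) -` B = (\<lambda>z j. z j + (if j = n then d n else 0)) -` B'"
    unfolding B'_def by (simp add: vimage_def fe)
  have "emeasure LP ((\<lambda>z j. z j + d j) -` B) \<le> ennreal (exp (sqrt 2 * \<bar>d n\<bar>)) * emeasure LP B'"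
    unfolding eq by (rule one_shift[OF B'm])
  also have "\<dots> \<le> ennreal (exp (sqrt 2 * \<bar>d n\<bar>)) * (ennreal (exp (sqrt 2 * (\<Sum>j<n. \<bar>d' j\<bar>))) * emeasure LP B)"
    unfolding B'_def by (intro mult_left_mono Suc.IH d' Suc.prems(2)) auto
  also have "(\<Sum>j<n. \<bar>d' j\<bar>) = (\<Sum>j<n. \<bar>d j\<bar>)" unfolding d'_def by (intro sum.cong) auto
  also have "ennreal (exp (sqrt 2 * \<bar>d n\<bar>)) * (ennreal (exp (sqrt 2 * (\<Sum>j<n. \<bar>d j\<bar>))) * emeasure LP B)
      = ennreal (exp (sqrt 2 * (\<Sum>j<Suc n. \<bar>d j\<bar>))) * emeasure LP B"
  proof -
    have "exp (sqrt 2 * (\<Sum>j<Suc n. \<bar>d j\<bar>)) = exp (sqrt 2 * \<bar>d n\<bar>) * exp (sqrt 2 * (\<Sum>j<n. \<bar>d j\<bar>))"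
      by (simp add: distrib_left exp_add[symmetric] add.commute)
    then have "ennreal (exp (sqrt 2 * (\<Sum>j<Suc n. \<bar>d j\<bar>))) = ennreal (exp (sqrt 2 * \<bar>d n\<bar>)) * ennreal (exp (sqrt 2 * (\<Sum>j<n. \<bar>d j\<bar>)))"
      by (simp add: ennreal_mult)
    then show ?thesis by (simp add: mult.assoc)
  qed
  finally show ?case .
qed

lemma sum_shift:
  assumes d: "summable (\<lambda>j. \<bar>d j\<bar>)" and A: "A \<in> sets SP"
  shows "measure LP ((\<lambda>z j. z j + d j) -` A) \<le> exp (sqrt 2 * (\<Sum>j. \<bar>d j\<bar>)) * measure LP A"
proof -
  interpret LPp: prob_space LP by (rule LP_prob)
  define \<nu> where "\<nu> = distr LP SP (\<lambda>z j. z j + d j)"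
  have mLP: "(\<lambda>z j. z j + d j) \<in> measurable LP SP"
    using shift_meas[of d] by (simp add: measurable_cong_sets[OF sets_LP refl])
  interpret nup: prob_space \<nu> unfolding \<nu>_def by (rule LPp.prob_space_distr[OF mLP])
  have nu_eq: "measure \<nu> X = measure LP ((\<lambda>z j. z j + d j) -` X)" if "X \<in> sets SP" for X
    unfolding \<nu>_def using that mLP by (subst measure_distr) auto
  define K where "K = exp (sqrt 2 * (\<Sum>j. \<bar>d j\<bar>))"
  have "measure \<nu> A \<le> K * measure LP A"
  proof (rule le_from_generator[where G=Gcyl])
    show "finite_measure LP" "finite_measure \<nu>" by unfold_locales
    show "space LP = UNIV" "sets \<nu> = sets LP" by (simp_all add: \<nu>_def)
    show "sets LP = sigma_sets UNIV Gcyl" using sets_SP_Gcyl by simp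
    show "Int_stable Gcyl" by (fact Gcyl_props(1))
    show "{} \<in> Gcyl" by (fact Gcyl_props(2))
    show "\<And>B. B \<in> Gcyl \<Longrightarrow> - B \<in> Gcyl" by (fact Gcyl_props(3))
    show "\<And>B C. B \<in> Gcyl \<Longrightarrow> C \<in> Gcyl \<Longrightarrow> B \<union> C \<in> Gcyl" by (fact Gcyl_props(4))
    show "K \<ge> 0" by (simp add: K_def)
    show "A \<in> sets LP" using A by simp
    fix B assume "B \<in> Gcyl"
    then obtain n where B: "B \<in> sets SP" and n: "\<forall>z z'. (\<forall>j<n. z j = z' j) \<longrightarrow> (z \<in> B \<longleftrightarrow> z' \<in> B)"
      unfolding Gcyl_def by blast
    define dn where "dn j = (if j < n then d j else 0)" for j
    have "(\<lambda>z j. z j + d j) -` B = (\<lambda>z j. z j + dn j) -` B"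
    proof (intro set_eqI)
      fix z :: "nat \<Rightarrow> real"
      show "z \<in> (\<lambda>z j. z j + d j) -` B \<longleftrightarrow> z \<in> (\<lambda>z j. z j + dn j) -` B"
        using n[rule_format, of "\<lambda>j. z j + d j" "\<lambda>j. z j + dn j"] by (simp add: dn_def)
    qed
    then have "measure \<nu> B = measure LP ((\<lambda>z j. z j + dn j) -` B)" using nu_eq[OF B] by simp
    also have "\<dots> \<le> exp (sqrt 2 * (\<Sum>j<n. \<bar>dn j\<bar>)) * measure LP B"
    proof -
      have "emeasure LP ((\<lambda>z j. z j + dn j) -` B) \<le> ennreal (exp (sqrt 2 * (\<Sum>j<n. \<bar>dn j\<bar>))) * emeasure LP B"
        by (rule fin_shift[OF _ B]) (simp add: dn_def)
      then show ?thesis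
        by (simp add: LPp.emeasure_eq_measure ennreal_mult[symmetric] ennreal_le_iff)
    qed
    also have "(\<Sum>j<n. \<bar>dn j\<bar>) = (\<Sum>j<n. \<bar>d j\<bar>)" by (simp add: dn_def)
    also have "exp (sqrt 2 * (\<Sum>j<n. \<bar>d j\<bar>)) \<le> K"
      unfolding K_def using sum_le_suminf[OF d, of "{..<n}"] by (simp add: mult_left_mono)
    finally show "measure \<nu> B \<le> K * measure LP B" by (simp add: mult_right_mono)
  qed
  then show ?thesis using nu_eq[OF A] by (simp add: K_def)
qed

end


lemma bessel:
  fixes \<phi> :: "nat \<Rightarrow> 'a::real_inner"
  assumes on: "\<And>i j. \<phi> i \<bullet> \<phi> j = (if i = j then 1 else 0)"
  shows "(\<Sum>j<n. (x \<bullet> \<phi> j)\<^sup>2) \<le> (norm x)\<^sup>2"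
proof -
  define p where "p = (\<Sum>j<n. (x \<bullet> \<phi> j) *\<^sub>R \<phi> j)"
  have xp: "x \<bullet> p = (\<Sum>j<n. (x \<bullet> \<phi> j)\<^sup>2)"
    unfolding p_def by (simp add: inner_sum_right power2_eq_square)
  have pp: "(norm p)\<^sup>2 = (\<Sum>j<n. (x \<bullet> \<phi> j)\<^sup>2)"
    unfolding p_def by (rule on_norm_sum[OF on]) simp
  have "0 \<le> (norm (x - p))\<^sup>2" by simp
  also have "(norm (x - p))\<^sup>2 = (norm x)\<^sup>2 - 2 * (x \<bullet> p) + (norm p)\<^sup>2"
    by (simp add: power2_norm_eq_inner inner_diff_left inner_diff_right inner_commute)
  finally show ?thesis using xp pp by simp
qed

lemma bessel_summable:
  fixes \<phi> :: "nat \<Rightarrow> 'a::real_inner"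
  assumes on: "\<And>i j. \<phi> i \<bullet> \<phi> j = (if i = j then 1 else 0)"
  shows "summable (\<lambda>j. (x \<bullet> \<phi> j)\<^sup>2)"
  by (rule summableI_nonneg_bounded[where x="(norm x)\<^sup>2"]) (auto intro: bessel[OF on])

lemma onb_eq:
  fixes \<phi> :: "nat \<Rightarrow> 'a::{real_inner,complete_space}"
  assumes onb: "orthonormal_basis \<phi>" and eq: "\<And>k. u \<bullet> \<phi> k = v \<bullet> \<phi> k"
  shows "u = v"
proof -
  have on: "\<And>i j. \<phi> i \<bullet> \<phi> j = (if i = j then 1 else 0)"
    using onb by (auto simp: orthonormal_basis_def)
  have "(\<lambda>n. \<Sum>j<n. (u \<bullet> \<phi> j) *\<^sub>R \<phi> j) \<longlonglongrightarrow> u"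
    by (rule onb_expansion[OF onb bessel_summable[OF on]])
  moreover have "(\<lambda>n. \<Sum>j<n. (u \<bullet> \<phi> j) *\<^sub>R \<phi> j) \<longlonglongrightarrow> v"
    unfolding eq by (rule onb_expansion[OF onb bessel_summable[OF on]])
  ultimately show ?thesis by (rule LIMSEQ_unique)
qed

locale hsetup =
  fixes lam :: "nat \<Rightarrow> real" and \<phi> :: "nat \<Rightarrow> 'a::{real_inner,complete_space}"
  assumes onb: "orthonormal_basis \<phi>" and lam_pos: "\<And>j. lam j > 0"
begin

lemma on: "\<phi> i \<bullet> \<phi> j = (if i = j then 1 else 0)"
  using onb by (auto simp: orthonormal_basis_def)

definition psum :: "nat \<Rightarrow> (nat \<Rightarrow> real) \<Rightarrow> 'a" where
  "psum n z = (\<Sum>j<n. (sqrt (lam j) * z j) *\<^sub>R \<phi> j)"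

definition Conv :: "(nat \<Rightarrow> real) set" where
  "Conv = {z. \<exists>m::nat. \<forall>n. (\<Sum>j<n. lam j * (z j)\<^sup>2) \<le> real m}"

definition Sfun :: "(nat \<Rightarrow> real) \<Rightarrow> 'a" where
  "Sfun z = (if z \<in> Conv then lim (\<lambda>n. psum n z) else 0)"

lemma Conv_iff: "z \<in> Conv \<longleftrightarrow> summable (\<lambda>j. lam j * (z j)\<^sup>2)"
proof
  assume "z \<in> Conv"
  then obtain m :: nat where m: "\<And>n. (\<Sum>j<n. lam j * (z j)\<^sup>2) \<le> real m" by (auto simp: Conv_def)
  show "summable (\<lambda>j. lam j * (z j)\<^sup>2)"
    by (rule summableI_nonneg_bounded[where x="real m"]) (auto intro: m less_imp_le[OF lam_pos] mult_nonneg_nonneg)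
next
  assume s: "summable (\<lambda>j. lam j * (z j)\<^sup>2)"
  obtain m :: nat where "(\<Sum>j. lam j * (z j)\<^sup>2) \<le> real m" using real_arch_simple by blast
  moreover have "(\<Sum>j<n. lam j * (z j)\<^sup>2) \<le> (\<Sum>j. lam j * (z j)\<^sup>2)" for n
    by (rule sum_le_suminf[OF s]) (auto intro: less_imp_le[OF lam_pos] mult_nonneg_nonneg)
  ultimately show "z \<in> Conv" unfolding Conv_def by (auto intro: order_trans)
qed

lemma psum_conv: "z \<in> Conv \<Longrightarrow> (\<lambda>n. psum n z) \<longlonglongrightarrow> Sfun z"
proof -
  assume z: "z \<in> Conv"
  have "summable (\<lambda>j. (sqrt (lam j) * z j)\<^sup>2)"
    using z unfolding Conv_iff by (simp add: power_mult_distrib less_imp_le[OF lam_pos])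
  then have "convergent (\<lambda>n. psum n z)" unfolding psum_def by (rule on_convergent[OF on])
  then show ?thesis using z by (simp add: Sfun_def convergent_LIMSEQ_iff)
qed

lemma cont_meas_SP:
  fixes f :: "(nat \<Rightarrow> real) \<Rightarrow> 'b::topological_space"
  assumes "continuous_on UNIV f"
  shows "f \<in> borel_measurable SP"
proof -
  have f: "f \<in> borel_measurable borel" by (rule borel_measurable_continuous_onI[OF assms])
  have e: "sets (borel :: (nat \<Rightarrow> real) measure) = sets SP"
    by (rule sets_PiM_equal_borel[symmetric])
  have "measurable (borel :: (nat \<Rightarrow> real) measure) (borel :: 'b measure) = measurable SP borel"
    by (rule measurable_cong_sets[OF e refl])
  with f show ?thesis by (simp only:)
qed

lemma Conv_sets[measurable]: "Conv \<in> sets SP"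
proof -
  have fm[measurable]: "(\<lambda>z. \<Sum>j<n. lam j * (z j)\<^sup>2) \<in> borel_measurable SP" for n
    by (intro cont_meas_SP continuous_intros continuous_on_product_coordinates)
  have "Conv = (\<Union>m::nat. \<Inter>n::nat. {z \<in> space SP. (\<Sum>j<n. lam j * (z j)\<^sup>2) \<le> real m})"
    by (auto simp: Conv_def)
  also have "\<dots> \<in> sets SP"
  proof -
    have pc: "{z \<in> space SP. (\<Sum>j<n. lam j * (z j)\<^sup>2) \<le> real m} \<in> sets SP" for m n :: nat
    proof -
      have "(\<lambda>z. \<Sum>j<n. lam j * (z j)\<^sup>2) -` {..real m} \<inter> space SP \<in> sets SP"
        by (rule measurable_sets[OF fm]) simp
      moreover have "(\<lambda>z. \<Sum>j<n. lam j * (z j)\<^sup>2) -` {..real m} \<inter> space SP = {z \<in> space SP. (\<Sum>j<n. lam j * (z j)\<^sup>2) \<le> real m}"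
        by auto
      ultimately show ?thesis by simp
    qed
    have pc': "{z. (\<Sum>j<n. lam j * (z j)\<^sup>2) \<le> real m} \<in> sets SP" for m n :: nat
      using pc[of n m] by simp
    show ?thesis by (intro sets.countable_UN) (auto intro!: sets.countable_INT pc')
  qed
  finally show ?thesis .
qed

lemma psum_meas[measurable]: "psum n \<in> borel_measurable SP"
  unfolding psum_def by (intro cont_meas_SP continuous_intros continuous_on_product_coordinates)

lemma Sfun_meas[measurable]: "Sfun \<in> borel_measurable SP"
proof (rule borel_measurable_LIMSEQ_metric[where f="\<lambda>n z. if z \<in> Conv then psum n z else 0"])
  fix n show "(\<lambda>z. if z \<in> Conv then psum n z else 0) \<in> borel_measurable SP" by measurable
next
  fix z assume "z \<in> space SP"
  show "(\<lambda>n. if z \<in> Conv then psum n z else 0) \<longlonglongrightarrow> Sfun z"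
  proof (cases "z \<in> Conv")
    case True then show ?thesis using psum_conv[OF True] by simp
  next
    case False then show ?thesis by (simp add: Sfun_def)
  qed
qed

lemma Sfun_inner: "z \<in> Conv \<Longrightarrow> Sfun z \<bullet> \<phi> k = sqrt (lam k) * z k"
proof -
  assume z: "z \<in> Conv"
  have t: "(\<lambda>n. psum n z \<bullet> \<phi> k) \<longlonglongrightarrow> Sfun z \<bullet> \<phi> k"
    by (intro tendsto_inner psum_conv z tendsto_const)
  have ev: "\<And>n. n \<ge> Suc k \<Longrightarrow> psum n z \<bullet> \<phi> k = sqrt (lam k) * z k"
    by (auto simp: psum_def inner_sum_left on if_distrib cong: if_cong)
  have "(\<lambda>n. psum n z \<bullet> \<phi> k) \<longlonglongrightarrow> sqrt (lam k) * z k"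
  proof (rule LIMSEQ_offset[where k="Suc k"])
    have "(\<lambda>n. psum (n + Suc k) z \<bullet> \<phi> k) = (\<lambda>_. sqrt (lam k) * z k)"
      using ev by (intro ext) (metis le_add2)
    then show "(\<lambda>n. psum (n + Suc k) z \<bullet> \<phi> k) \<longlonglongrightarrow> sqrt (lam k) * z k" by simp
  qed
  with t show ?thesis by (rule LIMSEQ_unique)
qed

lemma Sfun_shift:
  fixes h :: 'a and \<sigma> :: real
  assumes z: "z \<in> Conv" and sig: "\<sigma> > 0"
  defines "c \<equiv> (\<lambda>j. (h \<bullet> \<phi> j) / (\<sigma> * sqrt (lam j)))"
  shows "(\<lambda>j. z j + c j) \<in> Conv" "Sfun (\<lambda>j. z j + c j) = Sfun z + (1 / \<sigma>) *\<^sub>R h"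
proof -
  have sc: "sqrt (lam j) * c j = (h \<bullet> \<phi> j) / \<sigma>" for j
    unfolding c_def using lam_pos[of j] sig by (simp add: field_simps)
  have lc: "lam j * (c j)\<^sup>2 = (h \<bullet> \<phi> j)\<^sup>2 / \<sigma>\<^sup>2" for j
  proof -
    have "lam j * (c j)\<^sup>2 = (sqrt (lam j) * c j)\<^sup>2"
      using lam_pos[of j] by (simp add: power_mult_distrib)
    then show ?thesis by (simp add: sc power_divide)
  qed
  have s1: "summable (\<lambda>j. lam j * (z j)\<^sup>2)" using z Conv_iff by simp
  have s2: "summable (\<lambda>j. lam j * (c j)\<^sup>2)"
    unfolding lc using bessel_summable[OF on, of h] by (intro summable_divide)
  have sg: "summable (\<lambda>j. 2 * (lam j * (z j)\<^sup>2) + 2 * (lam j * (c j)\<^sup>2))"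
    using s1 s2 by (intro summable_add summable_mult)
  have bnd: "norm (lam j * (z j + c j)\<^sup>2) \<le> 2 * (lam j * (z j)\<^sup>2) + 2 * (lam j * (c j)\<^sup>2)" for j
  proof -
    have "(z j + c j)\<^sup>2 \<le> 2 * (z j)\<^sup>2 + 2 * (c j)\<^sup>2"
    proof -
      have "(z j + c j)\<^sup>2 + (z j - c j)\<^sup>2 = 2 * (z j)\<^sup>2 + 2 * (c j)\<^sup>2"
        by (simp add: power2_eq_square algebra_simps)
      moreover have "0 \<le> (z j - c j)\<^sup>2" by simp
      ultimately show ?thesis by linarith
    qed
    then have "lam j * (z j + c j)\<^sup>2 \<le> lam j * (2 * (z j)\<^sup>2 + 2 * (c j)\<^sup>2)"
      using lam_pos[of j] by (intro mult_left_mono) auto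
    then show ?thesis using lam_pos[of j] by (simp add: algebra_simps)
  qed
  have "\<exists>N. \<forall>n\<ge>N. norm (lam n * (z n + c n)\<^sup>2) \<le> 2 * (lam n * (z n)\<^sup>2) + 2 * (lam n * (c n)\<^sup>2)"
    using bnd by blast
  from summable_comparison_test[OF this sg] have "summable (\<lambda>j. lam j * (z j + c j)\<^sup>2)" .
  then show zc: "(\<lambda>j. z j + c j) \<in> Conv" using Conv_iff by simp
  have ps: "psum n (\<lambda>j. z j + c j) = psum n z + (1 / \<sigma>) *\<^sub>R (\<Sum>j<n. (h \<bullet> \<phi> j) *\<^sub>R \<phi> j)" for n
  proof -
    have "(sqrt (lam j) * (z j + c j)) *\<^sub>R \<phi> j = (sqrt (lam j) * z j) *\<^sub>R \<phi> j + (1 / \<sigma>) *\<^sub>R ((h \<bullet> \<phi> j) *\<^sub>R \<phi> j)" for j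
      by (simp add: distrib_left scaleR_add_left sc)
    then show ?thesis unfolding psum_def by (simp only: sum.distrib scaleR_sum_right)
  qed
  have "(\<lambda>n. psum n (\<lambda>j. z j + c j)) \<longlonglongrightarrow> Sfun z + (1 / \<sigma>) *\<^sub>R h"
    unfolding ps
    by (intro tendsto_add psum_conv z tendsto_scaleR tendsto_const onb_expansion[OF onb bessel_summable[OF on]])
  moreover have "(\<lambda>n. psum n (\<lambda>j. z j + c j)) \<longlonglongrightarrow> Sfun (\<lambda>j. z j + c j)"
    by (rule psum_conv[OF zc])
  ultimately show "Sfun (\<lambda>j. z j + c j) = Sfun z + (1 / \<sigma>) *\<^sub>R h"
    using LIMSEQ_unique by blast
qed

end


theorem theorem4:
  fixes M :: "'w measure" and Z :: "'w \<Rightarrow> 'a::{real_inner,complete_space}"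
    and C :: "'a \<Rightarrow> 'a" and lam :: "nat \<Rightarrow> real" and \<phi> :: "nat \<Rightarrow> 'a"
    and Ds :: "'r list set" and f :: "'r list \<Rightarrow> 'a" and \<epsilon> :: real
  assumes C_lin: "bounded_linear C"
    and C_eig: "\<And>j. C (\<phi> j) = lam j *\<^sub>R \<phi> j"
    and onb: "orthonormal_basis \<phi>"
    and lam_pos: "\<And>j. lam j > 0"
    and lam_dec: "decseq lam"
    and lam_trace: "summable lam"
    and f_H1C: "\<And>D. D \<in> Ds \<Longrightarrow> in_H1C lam \<phi> (f D)"
    and sens_pos: "0 < sensitivity lam \<phi> Ds f"
    and sens_fin: "sensitivity lam \<phi> Ds f < \<infinity>"
    and eps_pos: "\<epsilon> > 0"
    and M: "prob_space M"
    and Z: "is_ICLP M lam \<phi> 0 Z"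
  shows "differentially_private \<epsilon> Ds
           (\<lambda>D. distr M borel
                  (\<lambda>\<omega>. f D + (sqrt 2 * real_of_ereal (sensitivity lam \<phi> Ds f) / \<epsilon>) *\<^sub>R Z \<omega>))"
proof -
  interpret M: prob_space M by (rule M)
  interpret H: hsetup lam \<phi> by unfold_locales (auto intro: onb lam_pos)
  have on: "\<And>i j. \<phi> i \<bullet> \<phi> j = (if i = j then 1 else 0)" by (rule H.on)
  have Zm[measurable]: "Z \<in> borel_measurable M" using Z by (simp add: is_ICLP_def)
  obtain Zs :: "nat \<Rightarrow> 'w \<Rightarrow> real" where
    ind: "M.indep_vars (\<lambda>_. borel) Zs UNIV" and
    dist: "\<And>j. distributed M lborel (Zs j) (\<lambda>x. ennreal (laplace_density x))" and
    L2: "(\<lambda>n. \<integral>\<^sup>+ \<omega>. ennreal ((norm (0 + (\<Sum>j<n. (sqrt (lam j) * Zs j \<omega>) *\<^sub>R \<phi> j) - Z \<omega>))\<^sup>2) \<partial>M) \<longlonglongrightarrow> 0"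
    using Z unfolding is_ICLP_def by blast
  have Zsm[measurable]: "Zs j \<in> borel_measurable M" for j
    using dist[of j] by (auto simp: distributed_def)
  have Zqm[measurable]: "(\<lambda>\<omega> j. Zs j \<omega>) \<in> measurable M SP"
    by (rule measurable_PiM_single') auto
  have Lap_distr: "distr M lborel (Zs j) = Lap" for j
    using dist[of j] unfolding distributed_def Lap_def by simp
  have Lp: "prob_space Lap" unfolding Lap_distr[of 0, symmetric] by (rule M.prob_space_distr) simp
  interpret lapprob by (rule lapprob.intro[OF Lp])
  interpret LPp: prob_space LP by (rule LP_prob)
  have Lap_distr': "distr M borel (Zs j) = Lap" for j
  proof (rule measure_eqI)
    show "sets (distr M borel (Zs j)) = sets Lap" by simp
    fix A assume "A \<in> sets (distr M borel (Zs j))"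
    then have A: "A \<in> sets borel" by simp
    have "emeasure (distr M borel (Zs j)) A = emeasure M (Zs j -` A \<inter> space M)"
      using A by (rule emeasure_distr[OF Zsm])
    also have "\<dots> = emeasure (distr M lborel (Zs j)) A"
      using A by (subst emeasure_distr) auto
    finally show "emeasure (distr M borel (Zs j)) A = emeasure Lap A" by (simp add: Lap_distr)
  qed
  have law: "distr M SP (\<lambda>\<omega> j. Zs j \<omega>) = LP"
  proof -
    have "distr M (PiM UNIV (\<lambda>_. borel)) (\<lambda>x. \<lambda>i\<in>UNIV. Zs i x) = PiM UNIV (\<lambda>i. distr M borel (Zs i))"
      using M.indep_vars_iff_distr_eq_PiM[where I="UNIV::nat set" and M'="\<lambda>_. borel" and X=Zs] ind by simp
    then show ?thesis by (simp add: Lap_distr' LP_def restrict_UNIV)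
  qed
  have lawm: "measure M {\<omega>\<in>space M. (\<lambda>j. Zs j \<omega>) \<in> B} = measure LP B" if "B \<in> sets SP" for B
  proof -
    have "measure LP B = measure (distr M SP (\<lambda>\<omega> j. Zs j \<omega>)) B" by (simp add: law)
    also have "\<dots> = measure M ((\<lambda>\<omega> j. Zs j \<omega>) -` B \<inter> space M)"
      using that by (rule measure_distr[OF Zqm])
    finally show ?thesis by (simp add: vimage_def Int_def conj_commute)
  qed
  have coord: "AE \<omega> in M. Z \<omega> \<bullet> \<phi> k = sqrt (lam k) * Zs k \<omega>" for k
  proof -
    define q where "q n \<omega> = ennreal ((norm (0 + (\<Sum>j<n. (sqrt (lam j) * Zs j \<omega>) *\<^sub>R \<phi> j) - Z \<omega>))\<^sup>2)" for n \<omega>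
    define c where "c \<omega> = ennreal ((sqrt (lam k) * Zs k \<omega> - Z \<omega> \<bullet> \<phi> k)\<^sup>2)" for \<omega>
    have innm: "(\<lambda>\<omega>. Z \<omega> \<bullet> \<phi> k) \<in> borel_measurable M"
      by (rule borel_measurable_continuous_on[OF _ Zm]) (intro continuous_intros)
    have cm: "c \<in> borel_measurable M" unfolding c_def using innm by measurable
    have cq: "c \<omega> \<le> q n \<omega>" if "n \<ge> Suc k" for n \<omega>
    proof -
      define P where "P = (\<Sum>j<n. (sqrt (lam j) * Zs j \<omega>) *\<^sub>R \<phi> j)"
      have "P \<bullet> \<phi> k = sqrt (lam k) * Zs k \<omega>"
        using that unfolding P_def by (auto simp: inner_sum_left on if_distrib cong: if_cong)
      then have "sqrt (lam k) * Zs k \<omega> - Z \<omega> \<bullet> \<phi> k = (P - Z \<omega>) \<bullet> \<phi> k"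
        by (simp add: inner_diff_left)
      moreover have "\<bar>(P - Z \<omega>) \<bullet> \<phi> k\<bar> \<le> norm (P - Z \<omega>)"
        using Cauchy_Schwarz_ineq2[of "P - Z \<omega>" "\<phi> k"] on[of k k] by (simp add: norm_eq_sqrt_inner)
      ultimately have "(sqrt (lam k) * Zs k \<omega> - Z \<omega> \<bullet> \<phi> k)\<^sup>2 \<le> (norm (P - Z \<omega>))\<^sup>2"
        by (metis abs_ge_zero power2_abs power_mono)
      then show ?thesis unfolding c_def q_def P_def by (intro ennreal_leI) simp
    qed
    have "(\<integral>\<^sup>+\<omega>. c \<omega> \<partial>M) \<le> 0"
    proof (rule tendsto_le[OF sequentially_bot])
      show "(\<lambda>n. \<integral>\<^sup>+\<omega>. q n \<omega> \<partial>M) \<longlonglongrightarrow> 0" using L2 unfolding q_def .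
      show "(\<lambda>n. \<integral>\<^sup>+\<omega>. c \<omega> \<partial>M) \<longlonglongrightarrow> (\<integral>\<^sup>+\<omega>. c \<omega> \<partial>M)" by simp
      show "\<forall>\<^sub>F n in sequentially. (\<integral>\<^sup>+\<omega>. c \<omega> \<partial>M) \<le> (\<integral>\<^sup>+\<omega>. q n \<omega> \<partial>M)"
        using eventually_ge_at_top[of "Suc k"] by eventually_elim (intro nn_integral_mono cq)
    qed
    then have "(\<integral>\<^sup>+\<omega>. c \<omega> \<partial>M) = 0" by simp
    then have "AE \<omega> in M. c \<omega> = 0" using nn_integral_0_iff_AE[OF cm] by simp
    then show ?thesis by eventually_elim (simp add: c_def)
  qed
  have coordall: "AE \<omega> in M. \<forall>k. Z \<omega> \<bullet> \<phi> k = sqrt (lam k) * Zs k \<omega>"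
    using coord by (simp add: AE_all_countable)
  have AEconv: "AE \<omega> in M. (\<lambda>j. Zs j \<omega>) \<in> H.Conv \<and> H.Sfun (\<lambda>j. Zs j \<omega>) = Z \<omega>"
    using coordall
  proof eventually_elim
    case (elim \<omega>)
    have "(\<Sum>j<n. lam j * (Zs j \<omega>)\<^sup>2) = (\<Sum>j<n. (Z \<omega> \<bullet> \<phi> j)\<^sup>2)" for n
      using elim lam_pos by (intro sum.cong) (auto simp: power_mult_distrib less_imp_le)
    then have "(\<Sum>j<n. lam j * (Zs j \<omega>)\<^sup>2) \<le> real (nat \<lceil>(norm (Z \<omega>))\<^sup>2\<rceil>)" for n
      using bessel[OF on, where n=n and x="Z \<omega>"] by (metis of_nat_nat order_trans real_nat_ceiling_ge)
    then have cv: "(\<lambda>j. Zs j \<omega>) \<in> H.Conv" unfolding H.Conv_def by blast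
    have "H.Sfun (\<lambda>j. Zs j \<omega>) = Z \<omega>"
      by (rule onb_eq[OF onb]) (simp add: H.Sfun_inner[OF cv] elim)
    with cv show ?case by simp
  qed
  define sens where "sens = sensitivity lam \<phi> Ds f"
  obtain \<Delta> where sensD: "sens = ereal \<Delta>"
    using sens_pos sens_fin unfolding sens_def by (cases "sensitivity lam \<phi> Ds f") auto
  have \<Delta>pos: "\<Delta> > 0" using sens_pos sensD unfolding sens_def by simp
  define \<sigma> where "\<sigma> = sqrt 2 * \<Delta> / \<epsilon>"
  have \<sigma>pos: "\<sigma> > 0" unfolding \<sigma>_def using \<Delta>pos eps_pos by simp
  have rs: "real_of_ereal (sensitivity lam \<phi> Ds f) = \<Delta>" using sensD unfolding sens_def by simp
  show ?thesis
    unfolding differentially_private_def rs \<sigma>_def[symmetric]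
  proof (intro ballI impI)
    fix D D' and A :: "'a set" assume D: "D \<in> Ds" and D': "D' \<in> Ds" and adj: "adjacent D D'" and A: "A \<in> sets borel"
    define h where "h = f D - f D'"
    have h_le: "norm1C lam \<phi> h \<le> \<Delta>"
    proof -
      have "ereal (norm1C lam \<phi> (f (fst (D, D')) - f (snd (D, D')))) \<le> sens"
        unfolding sens_def sensitivity_def using D D' adj by (intro SUP_upper) auto
      then show ?thesis using sensD by (simp add: h_def)
    qed
    have hs: "summable (\<lambda>j. \<bar>h \<bullet> \<phi> j\<bar> / sqrt (lam j))"
    proof (rule summable_comparison_test[OF exI[of _ 0]])
      show "summable (\<lambda>j. \<bar>f D \<bullet> \<phi> j\<bar> / sqrt (lam j) + \<bar>f D' \<bullet> \<phi> j\<bar> / sqrt (lam j))"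
        using f_H1C[OF D] f_H1C[OF D'] unfolding in_H1C_def by (rule summable_add)
      show "\<forall>n\<ge>0. norm (\<bar>h \<bullet> \<phi> n\<bar> / sqrt (lam n)) \<le> \<bar>f D \<bullet> \<phi> n\<bar> / sqrt (lam n) + \<bar>f D' \<bullet> \<phi> n\<bar> / sqrt (lam n)"
      proof (intro allI impI)
        fix n :: nat
        have "\<bar>h \<bullet> \<phi> n\<bar> \<le> \<bar>f D \<bullet> \<phi> n\<bar> + \<bar>f D' \<bullet> \<phi> n\<bar>"
          unfolding h_def inner_diff_left by linarith
        then show "norm (\<bar>h \<bullet> \<phi> n\<bar> / sqrt (lam n)) \<le> \<bar>f D \<bullet> \<phi> n\<bar> / sqrt (lam n) + \<bar>f D' \<bullet> \<phi> n\<bar> / sqrt (lam n)"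
          using lam_pos[of n] by (simp add: add_divide_distrib[symmetric] divide_right_mono)
      qed
    qed
    define c where "c = (\<lambda>j. (h \<bullet> \<phi> j) / (\<sigma> * sqrt (lam j)))"
    have absc: "\<bar>c j\<bar> = (\<bar>h \<bullet> \<phi> j\<bar> / sqrt (lam j)) / \<sigma>" for j
      unfolding c_def using \<sigma>pos lam_pos[of j] by (simp add: abs_divide abs_mult)
    have cs: "summable (\<lambda>j. \<bar>c j\<bar>)" unfolding absc by (rule summable_divide[OF hs])
    have csum: "(\<Sum>j. \<bar>c j\<bar>) = norm1C lam \<phi> h / \<sigma>"
      unfolding absc norm1C_def by (rule suminf_divide[OF hs])
    have Kle: "exp (sqrt 2 * (\<Sum>j. \<bar>c j\<bar>)) \<le> exp \<epsilon>"
    proof -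
      have "sqrt 2 * (\<Sum>j. \<bar>c j\<bar>) = norm1C lam \<phi> h * \<epsilon> / \<Delta>"
        unfolding csum \<sigma>_def using \<Delta>pos eps_pos by (simp add: field_simps)
      also have "\<dots> \<le> \<Delta> * \<epsilon> / \<Delta>"
        using h_le eps_pos \<Delta>pos by (intro divide_right_mono mult_right_mono) auto
      also have "\<dots> = \<epsilon>" using \<Delta>pos by simp
      finally show ?thesis by simp
    qed
    define X where "X E \<omega> = f E + \<sigma> *\<^sub>R Z \<omega>" for E \<omega>
    have Xm: "X E \<in> borel_measurable M" for E
      unfolding X_def by (rule borel_measurable_continuous_on[OF _ Zm]) (intro continuous_intros)
    define T where "T E z = f E + \<sigma> *\<^sub>R H.Sfun z" for E z
    have Tm: "T E \<in> borel_measurable SP" for E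
      unfolding T_def by (rule borel_measurable_continuous_on[OF _ H.Sfun_meas]) (intro continuous_intros)
    define B where "B E = T E -` A" for E
    have Bs: "B E \<in> sets SP" for E
      using measurable_sets[OF Tm A] by (simp add: B_def)
    have step1: "measure (distr M borel (X E)) A = measure M {\<omega>\<in>space M. (\<lambda>j. Zs j \<omega>) \<in> B E}" for E
    proof -
      have "measure (distr M borel (X E)) A = measure M (X E -` A \<inter> space M)"
        using A by (rule measure_distr[OF Xm])
      also have "\<dots> = measure M {\<omega>\<in>space M. (\<lambda>j. Zs j \<omega>) \<in> B E}"
      proof (rule M.finite_measure_eq_AE)
        show "AE \<omega> in M. \<omega> \<in> X E -` A \<inter> space M \<longleftrightarrow> \<omega> \<in> {\<omega>\<in>space M. (\<lambda>j. Zs j \<omega>) \<in> B E}"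
          using AEconv by eventually_elim (auto simp: X_def T_def B_def)
        show "X E -` A \<inter> space M \<in> sets M" using measurable_sets[OF Xm A] .
        have "(\<lambda>\<omega> j. Zs j \<omega>) -` B E \<inter> space M \<in> sets M" using measurable_sets[OF Zqm Bs] .
        then show "{\<omega>\<in>space M. (\<lambda>j. Zs j \<omega>) \<in> B E} \<in> sets M"
          by (simp add: vimage_def Int_def conj_commute)
      qed
      finally show ?thesis .
    qed
    have shift_eq: "measure M {\<omega>\<in>space M. (\<lambda>j. Zs j \<omega>) \<in> B D} = measure M {\<omega>\<in>space M. (\<lambda>j. Zs j \<omega> + c j) \<in> B D'}"
    proof (rule M.finite_measure_eq_AE)
      show "AE \<omega> in M. \<omega> \<in> {\<omega>\<in>space M. (\<lambda>j. Zs j \<omega>) \<in> B D} \<longleftrightarrow> \<omega> \<in> {\<omega>\<in>space M. (\<lambda>j. Zs j \<omega> + c j) \<in> B D'}"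
        using AEconv
      proof eventually_elim
        case (elim \<omega>)
        have "H.Sfun (\<lambda>j. Zs j \<omega> + c j) = H.Sfun (\<lambda>j. Zs j \<omega>) + (1 / \<sigma>) *\<^sub>R h"
          unfolding c_def by (rule H.Sfun_shift(2)[OF conjunct1[OF elim] \<sigma>pos])
        then have "\<sigma> *\<^sub>R H.Sfun (\<lambda>j. Zs j \<omega> + c j) = \<sigma> *\<^sub>R H.Sfun (\<lambda>j. Zs j \<omega>) + h"
          using \<sigma>pos by (simp add: scaleR_add_right)
        then have "T D' (\<lambda>j. Zs j \<omega> + c j) = T D (\<lambda>j. Zs j \<omega>)"
          unfolding T_def h_def by (simp add: algebra_simps)
        then show ?case by (simp add: B_def)
      qed
      have "(\<lambda>\<omega> j. Zs j \<omega>) -` B D \<inter> space M \<in> sets M" using measurable_sets[OF Zqm Bs] .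
      then show "{\<omega>\<in>space M. (\<lambda>j. Zs j \<omega>) \<in> B D} \<in> sets M"
        by (simp add: vimage_def Int_def conj_commute)
      have "(\<lambda>\<omega> j. Zs j \<omega>) -` ((\<lambda>z j. z j + c j) -` B D') \<inter> space M \<in> sets M"
        using measurable_sets[OF Zqm shift_sets[OF Bs]] .
      then show "{\<omega>\<in>space M. (\<lambda>j. Zs j \<omega> + c j) \<in> B D'} \<in> sets M"
        by (simp add: vimage_def Int_def conj_commute)
    qed
    have shift_law: "measure M {\<omega>\<in>space M. (\<lambda>j. Zs j \<omega> + c j) \<in> B D'} = measure LP ((\<lambda>z j. z j + c j) -` B D')"
    proof -
      have "measure M {\<omega>\<in>space M. (\<lambda>j. Zs j \<omega> + c j) \<in> B D'} = measure M {\<omega>\<in>space M. (\<lambda>j. Zs j \<omega>) \<in> (\<lambda>z j. z j + c j) -` B D'}"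
        by simp
      also have "\<dots> = measure LP ((\<lambda>z j. z j + c j) -` B D')"
        by (rule lawm[OF shift_sets[OF Bs]])
      finally show ?thesis .
    qed
    have "measure (distr M borel (X D)) A = measure LP ((\<lambda>z j. z j + c j) -` B D')"
      using step1[of D] shift_eq shift_law by simp
    also have "\<dots> \<le> exp (sqrt 2 * (\<Sum>j. \<bar>c j\<bar>)) * measure LP (B D')"
      by (rule sum_shift[OF cs Bs])
    also have "\<dots> \<le> exp \<epsilon> * measure LP (B D')"
      using Kle by (intro mult_right_mono) auto
    also have "measure LP (B D') = measure (distr M borel (X D')) A"
      using step1[of D'] lawm[OF Bs] by simp
    finally show "measure (distr M borel (\<lambda>\<omega>. f D + \<sigma> *\<^sub>R Z \<omega>)) A \<le> exp \<epsilon> * measure (distr M borel (\<lambda>\<omega>. f D' + \<sigma> *\<^sub>R Z \<omega>)) A"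
      unfolding X_def .
  qed
qed

end
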